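(* For arbitrary $\bar x,\bar s\in\mathbb{R}^{n+1}_{++}$, the matrix $\nabla\psi(\bar x)+\mathrm{diag}(\bar s/\bar x)$ satisfies $d^\top\big(\nabla\psi(\bar x)+\mathrm{diag}(\bar s/\bar x)\big)d>0$ for all nonzero $d\in\mathbb{R}^{n+1}$; in particular it is nonsingular, so for every right-hand side the linear system with this matrix has a unique solution, and hence the Newton system (N) at any $(\bar x^k,\bar s^k)\in\mathbb{R}^{n+1}_{++}\times\mathbb{R}^{n+1}_{++}$ has a unique solution.
   Context: Let $Q\in\mathbb{R}^{n_z\times n_z}$ be symmetric positive semidefinite, $c\in\mathbb{R}^{n_z}$, $A\in\mathbb{R}^{n_b\times n_z}$, $b\in\mathbb{R}^{n_b}$, and $n=n_z+n_b$. Define $M=\begin{bmatrix}Q&-A^\top\\ A&0\end{bmatrix}$ and $q=\begin{bmatrix}c\\-b\end{bmatrix}$. For $\bar x=(x,\tau)\in\mathbb{R}^{n+1}_{++}$ define $\psi(\bar x)=\begin{bmatrix} Mx+q\tau\\ -x^\top Mx/\tau-x^\top q\end{bmatrix}$ and its Jacobian $\nabla\psi(\bar x)=\begin{bmatrix} M & q\\ -x^\top(M+M^\top)/\tau-q^\top & x^\top Mx/\tau^2\end{bmatrix}$. $\bar s/\bar x$ is componentwise division. Newton system (N): given $\bar x^k,\bar s^k\in\mathbb{R}^{n+1}_{++}$ and $\eta,\gamma\in(0,1)$, let $\bar r^k=\bar s^k-\psi(\bar x^k)$ and $\bar\mu^k=(\bar x^k)^\top\bar s^k/(n+1)$; $(d_{\bar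 x},d_{\bar s})$ solves (N) if $d_{\bar s}-\nabla\psi(\bar x^k)d_{\bar x}=-\eta\bar r^k$ and $\bar x^k\odot d_{\bar s}+\bar s^k\odot d_{\bar x}=\gamma\bar\mu^k e-\bar x^k\odot\bar s^k$ ($\odot$ componentwise product, $e$ all-ones vector). *)

theory Defs
  imports "HOL-Analysis.Analysis"
begin

text \<open>Index types: 'z indexes R^{n_z}, 'b indexes R^{n_b}; R^n is indexed by 'z + 'b,
  and R^{n+1} is indexed by ('z + 'b) option, where None is the tau-coordinate.\<close>

definition Mmat :: "real^'z^'z \<Rightarrow> real^'z^'b \<Rightarrow> real^('z + 'b)^('z + 'b)" where
  "Mmat Q A = (\<chi> i j. case (i, j) of
      (Inl p, Inl p') \<Rightarrow> Q $ p $ p'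
    | (Inl p, Inr r) \<Rightarrow> - (A $ r $ p)
    | (Inr r, Inl p) \<Rightarrow> A $ r $ p
    | (Inr r, Inr r') \<Rightarrow> 0)"

definition qvec :: "real^'z \<Rightarrow> real^'b \<Rightarrow> real^('z + 'b)" where
  "qvec c b = (\<chi> i. case i of Inl p \<Rightarrow> c $ p | Inr r \<Rightarrow> - (b $ r))"

definition xpart :: "real^(('n::finite) option) \<Rightarrow> real^'n" where
  "xpart xb = (\<chi> i. xb $ Some i)"

definition taupart :: "real^(('n::finite) option) \<Rightarrow> real" where
  "taupart xb = xb $ None"

definition positive_vec :: "real^'n \<Rightarrow> bool" where
  "positive_vec v \<longleftrightarrow> (\<forall>i. 0 < v $ i)"

definition psi :: "real^('n::finite)^('n) \<Rightarrow> real^'n \<Rightarrow> real^('n option) \<Rightarrow> real^('n option)" where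
  "psi M q xb = (let x = xpart xb; \<tau> = taupart xb in
     (\<chi> k. case k of
        Some i \<Rightarrow> (M *v x + \<tau> *\<^sub>R q) $ i
      | None \<Rightarrow> - (x \<bullet> (M *v x)) / \<tau> - x \<bullet> q))"

definition grad_psi :: "real^('n::finite)^('n) \<Rightarrow> real^'n \<Rightarrow> real^('n option) \<Rightarrow> real^('n option)^('n option)" where
  "grad_psi M q xb = (let x = xpart xb; \<tau> = taupart xb in
     (\<chi> k l. case (k, l) of
        (Some i, Some j) \<Rightarrow> M $ i $ j
      | (Some i, None) \<Rightarrow> q $ i
      | (None, Some j) \<Rightarrow> - ((x v* (M + transpose M)) $ j) / \<tau> - q $ j
      | (None, None) \<Rightarrow> (x \<bullet> (M *v x)) / \<tau>\<^sup>2))"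

definition diag_div :: "real^'m \<Rightarrow> real^'m \<Rightarrow> real^'m^'m" where
  "diag_div s x = (\<chi> i j. if i = j then s $ i / x $ i else 0)"

definition newton_system ::
  "real^('n::finite)^('n) \<Rightarrow> real^'n \<Rightarrow> real \<Rightarrow> real \<Rightarrow> real^('n option) \<Rightarrow> real^('n option)
   \<Rightarrow> real^('n option) \<Rightarrow> real^('n option) \<Rightarrow> bool" where
  "newton_system M q \<eta> \<gamma> xk sk dx ds \<longleftrightarrow>
     (let r = sk - psi M q xk;
          \<mu> = (xk \<bullet> sk) / real CARD('n option) in
      ds - grad_psi M q xk *v dx = - (\<eta> *\<^sub>R r) \<and>
      (\<forall>i. xk $ i * ds $ i + sk $ i * dx $ i = \<gamma> * \<mu> - xk $ i * sk $ i))"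

end

theory Submission
  imports Defs
begin

lemma sumP: "(\<Sum>k\<in>(UNIV::('a::finite+'b::finite) set). f k) = (\<Sum>p\<in>UNIV. f (Inl p)) + (\<Sum>r\<in>UNIV. f (Inr r))"
  using sum.Plus[of "UNIV::'a set" "UNIV::'b set" f] by (simp add: comp_def)

lemma sumO: "(\<Sum>k\<in>(UNIV::('n::finite option) set). f k) = f None + (\<Sum>i\<in>UNIV. f (Some i))"
  by (simp add: UNIV_option_conv sum.reindex)

lemma quadA:
  fixes M :: "real^'n::finite^'n" and q :: "real^'n" and xb d :: "real^('n option)"
  assumes tau: "taupart xb \<noteq> 0"
  shows "d \<bullet> (grad_psi M q xb *v d) =
    (xpart d - (taupart d / taupart xb) *\<^sub>R xpart xb) \<bullet> (M *v (xpart d - (taupart d / taupart xb) *\<^sub>R xpart xb))"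
proof -
  define x where "x = xpart xb"
  define \<tau> where "\<tau> = taupart xb"
  define u where "u = xpart d"
  define t where "t = taupart d"
  have dS: "d $ Some i = u $ i" for i by (simp add: u_def xpart_def)
  have dN: "d $ None = t" by (simp add: t_def taupart_def)
  have rowS: "(grad_psi M q xb *v d) $ Some i = (M *v u) $ i + t * q $ i" for i
    by (simp add: matrix_vector_mult_def grad_psi_def Let_def sumO dS dN x_def[symmetric] \<tau>_def[symmetric] u_def mult.commute)
  define w where "w = x v* (M + transpose M)"
  have rowN0: "(grad_psi M q xb *v d) $ None = t * (x \<bullet> (M *v x)) / \<tau>^2 + (\<Sum>j\<in>UNIV. (- (w $ j) / \<tau> - q $ j) * u $ j)"
    by (simp add: matrix_vector_mult_def grad_psi_def Let_def sumO dS dN x_def[symmetric] \<tau>_def[symmetric] w_def[symmetric])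
  have "(\<Sum>j\<in>UNIV. (- (w $ j) / \<tau> - q $ j) * u $ j) = - (w \<bullet> u) / \<tau> - q \<bullet> u"
    by (simp add: inner_vec_def sum_subtractf sum_divide_distrib left_diff_distrib sum_negf)
  with rowN0 have rowN: "(grad_psi M q xb *v d) $ None = t * (x \<bullet> (M *v x)) / \<tau>^2 - ((x v* (M + transpose M)) \<bullet> u) / \<tau> - q \<bullet> u"
    by (simp add: w_def)
  have "d \<bullet> (grad_psi M q xb *v d) = t * (grad_psi M q xb *v d) $ None + (\<Sum>i\<in>UNIV. u $ i * (grad_psi M q xb *v d) $ Some i)"
    by (simp add: inner_vec_def sumO dS dN)
  also have "\<dots> = t * (t * (x \<bullet> (M *v x)) / \<tau>^2 - ((x v* (M + transpose M)) \<bullet> u) / \<tau> - q \<bullet> u) + (u \<bullet> (M *v u) + t * (u \<bullet> q))"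
    by (simp add: rowS rowN inner_vec_def distrib_left sum.distrib sum_distrib_left algebra_simps)
  also have "(x v* (M + transpose M)) \<bullet> u = x \<bullet> (M *v u) + u \<bullet> (M *v x)"
  proof -
    have "(x v* (M + transpose M)) \<bullet> u = x \<bullet> ((M + transpose M) *v u)" by (rule dot_lmul_matrix)
    also have "\<dots> = x \<bullet> (M *v u) + x \<bullet> (transpose M *v u)"
      by (simp add: matrix_vector_mult_add_rdistrib inner_add_right)
    also have "transpose M *v u = u v* M" by (simp add: transpose_transpose vector_transpose_matrix[symmetric])
    also have "x \<bullet> (u v* M) = u \<bullet> (M *v x)" by (metis dot_lmul_matrix inner_commute)
    finally show ?thesis .
  qed
  finally have L: "d \<bullet> (grad_psi M q xb *v d) = t * (t * (x \<bullet> (M *v x)) / \<tau>^2 - (x \<bullet> (M *v u) + u \<bullet> (M *v x)) / \<tau> - q \<bullet> u) + (u \<bullet> (M *v u) + t * (u \<bullet> q))" .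
  show ?thesis
    unfolding x_def[symmetric] \<tau>_def[symmetric] u_def[symmetric] t_def[symmetric] L
    using tau unfolding \<tau>_def[symmetric]
    by (simp add: matrix_vector_mult_diff_distrib matrix_vector_mult_scaleR inner_diff_left inner_diff_right
        inner_commute[of q u] power2_eq_square field_simps)
qed

lemma quadB:
  fixes Q :: "real^'z::finite^'z" and A :: "real^'z^'b::finite" and y :: "real^('z+'b)"
  shows "y \<bullet> (Mmat Q A *v y) = (\<chi> p. y $ Inl p) \<bullet> (Q *v (\<chi> p. y $ Inl p))"
proof -
  define yz where "yz = (\<chi> p. y $ Inl p)"
  have r1: "(Mmat Q A *v y) $ Inl p = (Q *v yz) $ p - (\<Sum>r\<in>UNIV. A $ r $ p * y $ Inr r)" for p
    by (simp add: matrix_vector_mult_def Mmat_def sumP yz_def sum_negf)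
  have r2: "(Mmat Q A *v y) $ Inr r = (\<Sum>p\<in>UNIV. A $ r $ p * y $ Inl p)" for r
    by (simp add: matrix_vector_mult_def Mmat_def sumP)
  have "y \<bullet> (Mmat Q A *v y) = (\<Sum>p\<in>UNIV. yz $ p * (Q *v yz) $ p)
      - (\<Sum>p\<in>UNIV. \<Sum>r\<in>UNIV. y $ Inl p * (A $ r $ p * y $ Inr r))
      + (\<Sum>r\<in>UNIV. \<Sum>p\<in>UNIV. y $ Inr r * (A $ r $ p * y $ Inl p))"
    by (simp add: inner_vec_def sumP r1 r2 right_diff_distrib sum_subtractf sum_distrib_left yz_def)
  also have "(\<Sum>p\<in>UNIV. \<Sum>r\<in>UNIV. y $ Inl p * (A $ r $ p * y $ Inr r))
      = (\<Sum>r\<in>UNIV. \<Sum>p\<in>UNIV. y $ Inr r * (A $ r $ p * y $ Inl p))"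
    by (subst sum.swap) (simp add: algebra_simps)
  finally show ?thesis by (simp add: inner_vec_def yz_def)
qed

lemma diag_mult: "(diag_div s x *v d) $ i = s $ i / x $ i * d $ i"
proof -
  have "(diag_div s x *v d) $ i = (\<Sum>j\<in>UNIV. (if i = j then s $ i / x $ i * d $ j else 0))"
    unfolding matrix_vector_mult_def diag_div_def vec_lambda_beta by (rule sum.cong) auto
  also have "\<dots> = s $ i / x $ i * d $ i" by (simp add: sum.delta)
  finally show ?thesis .
qed

theorem mainTheorem9:
  fixes Q :: "real^'z^'z" and A :: "real^'z^'b" and c :: "real^'z" and b :: "real^'b"
    and \<eta> \<gamma> :: real
    and xb sb :: "real^(('z + 'b) option)"
  assumes Q_sym: "transpose Q = Q"
    and Q_psd: "\<forall>v. 0 \<le> v \<bullet> (Q *v v)"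
    and eta: "0 < \<eta>" "\<eta> < 1"
    and gamma: "0 < \<gamma>" "\<gamma> < 1"
    and xpos: "positive_vec xb"
    and spos: "positive_vec sb"
  shows "(\<forall>d. d \<noteq> 0 \<longrightarrow>
            0 < d \<bullet> ((grad_psi (Mmat Q A) (qvec c b) xb + diag_div sb xb) *v d))
       \<and> invertible (grad_psi (Mmat Q A) (qvec c b) xb + diag_div sb xb)
       \<and> (\<forall>rhs. \<exists>!d. (grad_psi (Mmat Q A) (qvec c b) xb + diag_div sb xb) *v d = rhs)
       \<and> (\<exists>!dd. newton_system (Mmat Q A) (qvec c b) \<eta> \<gamma> xb sb (fst dd) (snd dd))"
proof -
  define G where "G = grad_psi (Mmat Q A) (qvec c b) xb"
  define K where "K = G + diag_div sb xb"
  have xp: "\<And>i. 0 < xb $ i" and sp: "\<And>i. 0 < sb $ i" using xpos spos by (auto simp: positive_vec_def)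
  have tau: "taupart xb \<noteq> 0" using xp[of None] by (simp add: taupart_def)
  have PD: "0 < d \<bullet> (K *v d)" if "d \<noteq> 0" for d
  proof -
    have g: "0 \<le> d \<bullet> (G *v d)"
      unfolding G_def quadA[OF tau] quadB using Q_psd by blast
    have "\<exists>i. d $ i \<noteq> 0" using that by (simp add: vec_eq_iff)
    then obtain i where i: "d $ i \<noteq> 0" by blast
    have dd: "d \<bullet> (diag_div sb xb *v d) = (\<Sum>j\<in>UNIV. sb $ j / xb $ j * (d $ j)^2)"
      by (simp add: inner_vec_def diag_mult power2_eq_square algebra_simps)
    have nn: "\<And>j. 0 \<le> sb $ j / xb $ j * (d $ j)^2" using xp sp
      by (simp add: less_imp_le)
    have "0 < sb $ i / xb $ i * (d $ i)^2" using xp[of i] sp[of i] i by simp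
    also have "\<dots> \<le> (\<Sum>j\<in>UNIV. sb $ j / xb $ j * (d $ j)^2)"
      using nn by (intro member_le_sum) (blast, blast, simp)
    finally have "0 < d \<bullet> (diag_div sb xb *v d)" using dd by simp
    with g show ?thesis by (simp add: K_def matrix_vector_mult_add_rdistrib inner_add_right)
  qed
  have ker: "\<And>d. K *v d = 0 \<Longrightarrow> d = 0" using PD by fastforce
  then obtain B where B: "B ** K = mat 1" using matrix_left_invertible_ker by blast
  hence inv: "invertible K" using invertible_left_inverse by blast
  have KB: "K ** B = mat 1" using B matrix_left_right_inverse by blast
  have uniq: "\<exists>!d. K *v d = rhs" for rhs
  proof
    show "K *v (B *v rhs) = rhs" using KB by (simp add: matrix_vector_mul_assoc)
  next
    fix d assume "K *v d = rhs"
    hence "B *v (K *v d) = B *v rhs" by simp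
    thus "d = B *v rhs" using B by (simp add: matrix_vector_mul_assoc)
  qed
  define r where "r = sb - psi (Mmat Q A) (qvec c b) xb"
  define \<mu> where "\<mu> = (xb \<bullet> sb) / real CARD(('z + 'b) option)"
  define v where "v = (\<chi> i. (\<gamma> * \<mu> - xb $ i * sb $ i + \<eta> * xb $ i * r $ i) / xb $ i)"
  have NS: "newton_system (Mmat Q A) (qvec c b) \<eta> \<gamma> xb sb dx ds \<longleftrightarrow>
      (ds = G *v dx - \<eta> *\<^sub>R r \<and> K *v dx = v)" for dx ds
  proof -
    have "(\<forall>i. xb $ i * (G *v dx - \<eta> *\<^sub>R r) $ i + sb $ i * dx $ i = \<gamma> * \<mu> - xb $ i * sb $ i)
        \<longleftrightarrow> K *v dx = v"
    proof -
      have e: "xb $ i * (G *v dx - \<eta> *\<^sub>R r) $ i + sb $ i * dx $ i = \<gamma> * \<mu> - xb $ i * sb $ i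
          \<longleftrightarrow> (K *v dx) $ i = v $ i" for i
        using xp[of i]
        by (simp add: K_def v_def matrix_vector_mult_add_rdistrib diag_mult field_simps)
      show ?thesis unfolding vec_eq_iff using e by blast
    qed
    moreover have "ds - G *v dx = - (\<eta> *\<^sub>R r) \<longleftrightarrow> ds = G *v dx - \<eta> *\<^sub>R r"
      by (auto simp: algebra_simps)
    ultimately show ?thesis
      unfolding newton_system_def Let_def r_def[symmetric] \<mu>_def[symmetric] G_def[symmetric]
      by auto
  qed
  have N: "\<exists>!dd. newton_system (Mmat Q A) (qvec c b) \<eta> \<gamma> xb sb (fst dd) (snd dd)"
  proof -
    obtain dx where dx: "K *v dx = v" using uniq by blast
    show ?thesis
    proof
      show "newton_system (Mmat Q A) (qvec c b) \<eta> \<gamma> xb sb (fst (dx, G *v dx - \<eta> *\<^sub>R r)) (snd (dx, G *v dx - \<eta> *\<^sub>R r))"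
        using dx by (simp add: NS)
    next
      fix dd assume "newton_system (Mmat Q A) (qvec c b) \<eta> \<gamma> xb sb (fst dd) (snd dd)"
      hence h: "snd dd = G *v fst dd - \<eta> *\<^sub>R r" "K *v fst dd = v" by (auto simp: NS)
      have "fst dd = dx" using uniq[of v] dx h(2) by blast
      with h(1) show "dd = (dx, G *v dx - \<eta> *\<^sub>R r)" by (metis prod.collapse)
    qed
  qed
  show ?thesis using PD inv uniq N unfolding K_def G_def by blast
qed

end
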